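(* Let $R$ be a commutative ring. An $n\times n$ matrix $X$ over $R$ satisfies $XA=AX^T$ for every $n\times n$ reverse circulant matrix $A$ over $R$ if and only if $X$ is a circulant matrix.
   Context: An $n\times n$ matrix $(a_{ij})$ is circulant if $a_{ij}$ depends only on $(j-i)\bmod n$, and reverse circulant if $a_{ij}$ depends only on $(i+j)\bmod n$. *)

theory Defs
  imports Main
begin

text \<open>n x n matrices over a commutative ring are represented as functions
  nat \<Rightarrow> nat \<Rightarrow> 'a, only the entries with indices in {0..<n} being relevant.\<close>

definition circulant :: "nat \<Rightarrow> (nat \<Rightarrow> nat \<Rightarrow> 'a) \<Rightarrow> bool" where
  "circulant n A \<longleftrightarrow>
     (\<forall>i<n. \<forall>j<n. \<forall>k<n. \<forall>l<n.
        (int j - int i) mod int n = (int l - int k) mod int n \<longrightarrow> A i j = A k l)"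

definition reverse_circulant :: "nat \<Rightarrow> (nat \<Rightarrow> nat \<Rightarrow> 'a) \<Rightarrow> bool" where
  "reverse_circulant n A \<longleftrightarrow>
     (\<forall>i<n. \<forall>j<n. \<forall>k<n. \<forall>l<n.
        (i + j) mod n = (k + l) mod n \<longrightarrow> A i j = A k l)"

definition mat_mult :: "nat \<Rightarrow> (nat \<Rightarrow> nat \<Rightarrow> 'a::comm_ring_1) \<Rightarrow> (nat \<Rightarrow> nat \<Rightarrow> 'a) \<Rightarrow> nat \<Rightarrow> nat \<Rightarrow> 'a" where
  "mat_mult n A B = (\<lambda>i j. \<Sum>k<n. A i k * B k j)"

definition mat_transpose :: "(nat \<Rightarrow> nat \<Rightarrow> 'a) \<Rightarrow> nat \<Rightarrow> nat \<Rightarrow> 'a" where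
  "mat_transpose A = (\<lambda>i j. A j i)"

end

theory Submission
  imports Defs
begin

lemma modeq_int: "(a::nat) mod n = b mod n \<longleftrightarrow> int a mod int n = int b mod int n"
  by (metis of_nat_eq_iff zmod_int)

lemma solve_idx:
  assumes "k < n" "j < n" "(m::nat) < n"
  shows "(k + j) mod n = m \<longleftrightarrow> k = (m + n - j) mod n"
proof -
  have "(k + j) mod n = m \<longleftrightarrow> (k+j) mod n = m mod n" using assms(3) by simp
  also have "\<dots> \<longleftrightarrow> int (k+j) mod int n = int m mod int n" by (rule modeq_int)
  also have "\<dots> \<longleftrightarrow> int n dvd int (k+j) - int m" by (rule mod_eq_dvd_iff)
  also have "\<dots> \<longleftrightarrow> int n dvd int k - int (m + n - j)"
  proof -
    have "int k - int (m + n - j) = (int (k+j) - int m) - int n" using assms by (simp add: of_nat_diff)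
    then show ?thesis by (metis dvd_add dvd_diff dvd_refl diff_add_cancel)
  qed
  also have "\<dots> \<longleftrightarrow> int k mod int n = int (m + n - j) mod int n" by (rule mod_eq_dvd_iff[symmetric])
  also have "\<dots> \<longleftrightarrow> k mod n = (m+n-j) mod n" by (rule modeq_int[symmetric])
  also have "\<dots> \<longleftrightarrow> k = (m+n-j) mod n" using assms by simp
  finally show ?thesis .
qed

lemma sum_ind:
  fixes X :: "nat \<Rightarrow> 'a::comm_ring_1"
  assumes "j < n" "(m::nat) < n"
  shows "(\<Sum>k<n. X k * (if (k + j) mod n = m then 1 else 0)) = X ((m + n - j) mod n)"
proof -
  have "(\<Sum>k<n. X k * (if (k + j) mod n = m then 1 else 0)) = (\<Sum>k<n. if k = (m + n - j) mod n then X k else 0)"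
    by (rule sum.cong) (use assms solve_idx in auto)
  also have "\<dots> = X ((m + n - j) mod n)" using assms by simp
  finally show ?thesis .
qed

lemma sum_ind2:
  fixes X :: "nat \<Rightarrow> 'a::comm_ring_1"
  assumes "j < n" "(m::nat) < n"
  shows "(\<Sum>k<n. (if (j + k) mod n = m then 1 else 0) * X k) = X ((m + n - j) mod n)"
  using sum_ind[OF assms, of X] by (simp add: add.commute mult.commute)

lemma mod_back:
  assumes "(a::nat) < n" "(p + q) mod n = 0"
  shows "((a + p) mod n + q) mod n = a"
proof -
  have "((a + p) mod n + q) mod n = (a + (p + q)) mod n" by (simp add: mod_add_left_eq add.assoc)
  also have "\<dots> = (a + (p + q) mod n) mod n" by (simp add: mod_add_right_eq)
  also have "\<dots> = a" using assms by simp
  finally show ?thesis .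
qed

theorem mainTheorem5:
  fixes n :: nat and X :: "nat \<Rightarrow> nat \<Rightarrow> 'a::comm_ring_1"
  shows "(\<forall>A :: nat \<Rightarrow> nat \<Rightarrow> 'a. reverse_circulant n A \<longrightarrow>
            (\<forall>i<n. \<forall>j<n. mat_mult n X A i j = mat_mult n A (mat_transpose X) i j))
         \<longleftrightarrow> circulant n X"
proof
  assume H: "\<forall>A :: nat \<Rightarrow> nat \<Rightarrow> 'a. reverse_circulant n A \<longrightarrow>
            (\<forall>i<n. \<forall>j<n. mat_mult n X A i j = mat_mult n A (mat_transpose X) i j)"
  have key: "X i ((m + n - j) mod n) = X j ((m + n - i) mod n)" if "i < n" "j < n" "m < n" for i j m
  proof -
    define A :: "nat \<Rightarrow> nat \<Rightarrow> 'a" where "A = (\<lambda>i j. if (i + j) mod n = m then 1 else 0)"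
    have "reverse_circulant n A" unfolding reverse_circulant_def A_def by auto
    with H that have "mat_mult n X A i j = mat_mult n A (mat_transpose X) i j" by blast
    thus ?thesis unfolding mat_mult_def mat_transpose_def A_def
      using sum_ind[OF that(2,3), of "X i"] sum_ind2[OF that(1,3), of "X j"] by simp
  qed
  show "circulant n X" unfolding circulant_def
  proof (intro allI impI)
    fix i j k l assume a: "i < n" "j < n" "k < n" "l < n"
      "(int j - int i) mod int n = (int l - int k) mod int n"
    define m where "m = (j + k) mod n"
    have mn: "m < n" using a by (simp add: m_def)
    have e1: "(m + n - k) mod n = j"
    proof -
      have "int ((m + n - k) mod n) = (int m + int n - int k) mod int n"
        using mn a by (simp add: zmod_int of_nat_diff)
      also have "\<dots> = (((int j + int k) mod int n - int k) + int n) mod int n"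
        by (simp add: m_def zmod_int algebra_simps)
      also have "\<dots> = ((int j + int k) mod int n - int k) mod int n" by simp
      also have "\<dots> = ((int j + int k) - int k) mod int n" by (rule mod_diff_left_eq)
      also have "\<dots> = (int j + int k + int n - int k) mod int n" by simp
      also have "\<dots> = int j" using a by simp
      finally show ?thesis by simp
    qed
    have e2: "(m + n - i) mod n = l"
    proof -
      have "int ((m + n - i) mod n) = (int m + int n - int i) mod int n"
        using mn a by (simp add: zmod_int of_nat_diff)
      also have "\<dots> = (((int j + int k) mod int n - int i) + int n) mod int n"
        by (simp add: m_def zmod_int algebra_simps)
      also have "\<dots> = ((int j + int k) mod int n - int i) mod int n" by simp
      also have "\<dots> = ((int j + int k) - int i) mod int n" by (rule mod_diff_left_eq)
      also have "\<dots> = ((int j - int i) + int k) mod int n" by (simp add: algebra_simps)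
      also have "\<dots> = ((int l - int k) + int k) mod int n"
        using a(5) by (metis mod_add_left_eq)
      also have "\<dots> = int l" using a by simp
      finally show ?thesis by simp
    qed
    show "X i j = X k l" using key[OF a(1) a(3) mn] e1 e2 by simp
  qed
next
  assume C: "circulant n X"
  show "\<forall>A :: nat \<Rightarrow> nat \<Rightarrow> 'a. reverse_circulant n A \<longrightarrow>
            (\<forall>i<n. \<forall>j<n. mat_mult n X A i j = mat_mult n A (mat_transpose X) i j)"
  proof (intro allI impI)
    fix A :: "nat \<Rightarrow> nat \<Rightarrow> 'a" and i j
    assume R: "reverse_circulant n A" and ij: "i < n" "j < n"
    define f where "f = (\<lambda>k. (k + (n - i) + j) mod n)"
    define g where "g = (\<lambda>k. (k + (n - j) + i) mod n)"
    have bij: "bij_betw f {..<n} {..<n}"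
    proof (rule bij_betw_byWitness[where f' = g])
      show "\<forall>a\<in>{..<n}. g (f a) = a"
      proof
        fix a assume "a \<in> {..<n}"
        hence "a < n" by simp
        then show "g (f a) = a" unfolding f_def g_def using ij
          by (simp only: add.assoc) (rule mod_back, simp_all add: algebra_simps)
      qed
      show "\<forall>a\<in>{..<n}. f (g a) = a"
      proof
        fix a assume "a \<in> {..<n}"
        hence "a < n" by simp
        then show "f (g a) = a" unfolding f_def g_def using ij
          by (simp only: add.assoc) (rule mod_back, simp_all add: algebra_simps)
      qed
      show "f ` {..<n} \<subseteq> {..<n}" using ij by (auto simp: f_def)
      show "g ` {..<n} \<subseteq> {..<n}" using ij by (auto simp: g_def)
    qed
    have term_eq: "A i (f k) * X j (f k) = X i k * A k j" if k: "k < n" for k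
    proof -
      have fk: "f k < n" using ij by (simp add: f_def)
      have "(i + f k) mod n = (k + j) mod n" unfolding f_def using ij
        by (simp add: mod_simps) (metis add.commute add.left_commute mod_add_self2)
      hence a1: "A i (f k) = A k j" using R ij k fk unfolding reverse_circulant_def by blast
      have "(int (f k) - int j) mod int n = (int k - int i) mod int n"
      proof -
        have "int (f k) = (int k + int n - int i + int j) mod int n"
          unfolding f_def using ij by (simp add: zmod_int of_nat_diff algebra_simps)
        hence "(int (f k) - int j) mod int n = ((int k + int n - int i + int j) - int j) mod int n"
          by (simp add: mod_diff_left_eq)
        also have "\<dots> = ((int k - int i) + int n) mod int n" by (simp add: algebra_simps)
        also have "\<dots> = (int k - int i) mod int n" by simp
        finally show ?thesis .
      qed
      hence a2: "X j (f k) = X i k" using C ij k fk unfolding circulant_def by metis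
      show ?thesis using a1 a2 by (simp add: mult.commute)
    qed
    have "mat_mult n A (mat_transpose X) i j = (\<Sum>k<n. A i k * X j k)"
      by (simp add: mat_mult_def mat_transpose_def)
    also have "\<dots> = (\<Sum>k<n. A i (f k) * X j (f k))"
      using sum.reindex_bij_betw[OF bij, of "\<lambda>k. A i k * X j k"] by simp
    also have "\<dots> = (\<Sum>k<n. X i k * A k j)" by (rule sum.cong) (auto simp: term_eq)
    finally show "mat_mult n X A i j = mat_mult n A (mat_transpose X) i j"
      by (simp add: mat_mult_def)
  qed
qed
end
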